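(* Let $n\ge 1$, $M\ge1$ be integers and $a=(a_0,\dots,a_n)\in\mathbb{Z}^{n+1}$ with $0\le a_i\le M$ and $a_0=a_n=0$. Let $V=\{j+i/(2n+2): 0\le j<M,\ 0\le i\le 2n+2,\ i,j\in\mathbb{Z}\}$, $W=V^{2n+1}$, and let $G_0$ be the directed graph defined below. Then: (i) if $y=(y_j)_{j\in\mathbb{Z}}$ is a tropical recurrent minimal sequence with all $y_j\in V$ satisfying $a$, then every letter $Y_i=(y_i,\dots,y_{i+2n})$ of the sequence $Y=Y(y)=(Y_i)_{i\in\mathbb{Z}}$ is a vertex of $G_0$ and there is an arrow in $G_0$ from $Y_i$ to $Y_{i+1}$ for every $i$; thus $Y$ gives a bi-infinite path $p(Y)$ in $G_0$; (ii) conversely, for every bi-infinite path $p$ in $G_0$ there is a unique tropical recurrent minimal sequence $y$ with values in $V$ satisfying $a$ such that $p=p(Y(y))$; (iii) $y$ is periodic with period $d$ if and only if $Y(y)$ is periodic with period $d$.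
   Context: A vector $z=(z_0,\dots,z_N)\in\mathbb{R}^{N+1}$ satisfies $a$ and is minimal if for each $0\le k\le N-n$ the minimum $\min_{0\le i\le n}\{a_i+z_{i+k}\}$ is attained at least twice, and for each $n\le j\le N-n$ there exists $j-n\le k\le j$ with $a_{j-k}+z_j=\min_{0\le i\le n}\{a_i+z_{k+i}\}$. The graph $G_0$ has as vertices the elements $(z_0,\dots,z_{2n})\in W$ which (with $N=2n$) satisfy $a$ and are minimal; there is an arrow from $(z_0,\dots,z_{2n})$ to $(z'_0,\dots,z'_{2n})$ iff $z_{i+1}=z'_i$ for $0\le i\le 2n-1$ (loops allowed). A tropical recurrent sequence is $y=(y_j)_{j\in\mathbb{Z}}$ with real entries; it satisfies $a$ if for every $k\in\mathbb{Z}$ the minimum $\min_{0\le i\le n}\{a_i+y_{i+k}\}$ is attained for at least two different $i$; it is minimal if for every $j$ there is $k$ with $j-n\le k\le j$ and $a_{j-k}+y_j=\min_{0\le i\le n}\{a_i+y_{i+k}\}$. A sequence $(x_j)_{j\in\mathbb{Z}}$ (of numbers or of letters of $W$) is periodic with period $d\ge 1$ if $x_{j+d}=x_j$ for all $j$. *)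

theory Defs
  imports Main "HOL.Real"
begin

text \<open>The tropical coefficient vector a = (a_0,...,a_n) is a function nat => int,
  only its values at 0..n matter. Sequences are indexed by int.\<close>

definition trop_min :: "nat \<Rightarrow> (nat \<Rightarrow> int) \<Rightarrow> (int \<Rightarrow> real) \<Rightarrow> int \<Rightarrow> real" where
  "trop_min n a y k = Min ((\<lambda>i. real_of_int (a i) + y (k + int i)) ` {..n})"

definition min_twice :: "nat \<Rightarrow> (nat \<Rightarrow> int) \<Rightarrow> (int \<Rightarrow> real) \<Rightarrow> int \<Rightarrow> bool" where
  "min_twice n a y k = (\<exists>i1\<le>n. \<exists>i2\<le>n. i1 \<noteq> i2 \<and>
      real_of_int (a i1) + y (k + int i1) = trop_min n a y k \<and>
      real_of_int (a i2) + y (k + int i2) = trop_min n a y k)"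

definition seq_satisfies :: "nat \<Rightarrow> (nat \<Rightarrow> int) \<Rightarrow> (int \<Rightarrow> real) \<Rightarrow> bool" where
  "seq_satisfies n a y = (\<forall>k::int. min_twice n a y k)"

definition seq_minimal :: "nat \<Rightarrow> (nat \<Rightarrow> int) \<Rightarrow> (int \<Rightarrow> real) \<Rightarrow> bool" where
  "seq_minimal n a y = (\<forall>j::int. \<exists>k. j - int n \<le> k \<and> k \<le> j \<and>
      real_of_int (a (nat (j - k))) + y j = trop_min n a y k)"

text \<open>Finite vectors z = (z_0,...,z_N), represented as lists of length N+1.\<close>

definition vec_fun :: "real list \<Rightarrow> int \<Rightarrow> real" where
  "vec_fun z j = z ! nat j"

definition vec_satisfies :: "nat \<Rightarrow> (nat \<Rightarrow> int) \<Rightarrow> real list \<Rightarrow> bool" where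
  "vec_satisfies n a z = (\<forall>k::int. 0 \<le> k \<and> k \<le> int (length z - 1) - int n \<longrightarrow>
      min_twice n a (vec_fun z) k)"

definition vec_minimal :: "nat \<Rightarrow> (nat \<Rightarrow> int) \<Rightarrow> real list \<Rightarrow> bool" where
  "vec_minimal n a z = (\<forall>j::int. int n \<le> j \<and> j \<le> int (length z - 1) - int n \<longrightarrow>
      (\<exists>k. j - int n \<le> k \<and> k \<le> j \<and>
        real_of_int (a (nat (j - k))) + vec_fun z j = trop_min n a (vec_fun z) k))"

definition Vset :: "nat \<Rightarrow> nat \<Rightarrow> real set" where
  "Vset n M = {real_of_int j + real_of_int i / real (2*n+2) | j i.
      0 \<le> j \<and> j < int M \<and> 0 \<le> i \<and> i \<le> int (2*n+2)}"

definition Wset :: "nat \<Rightarrow> nat \<Rightarrow> real list set" where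
  "Wset n M = {z. length z = 2*n+1 \<and> set z \<subseteq> Vset n M}"

definition G0_vertex :: "nat \<Rightarrow> nat \<Rightarrow> (nat \<Rightarrow> int) \<Rightarrow> real list \<Rightarrow> bool" where
  "G0_vertex n M a z = (z \<in> Wset n M \<and> vec_satisfies n a z \<and> vec_minimal n a z)"

definition G0_arrow :: "nat \<Rightarrow> nat \<Rightarrow> (nat \<Rightarrow> int) \<Rightarrow> real list \<Rightarrow> real list \<Rightarrow> bool" where
  "G0_arrow n M a z z' = (G0_vertex n M a z \<and> G0_vertex n M a z' \<and>
      (\<forall>i<2*n. z ! (i+1) = z' ! i))"

definition G0_path :: "nat \<Rightarrow> nat \<Rightarrow> (nat \<Rightarrow> int) \<Rightarrow> (int \<Rightarrow> real list) \<Rightarrow> bool" where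
  "G0_path n M a p = (\<forall>i::int. G0_vertex n M a (p i) \<and> G0_arrow n M a (p i) (p (i+1)))"

definition Yseq :: "nat \<Rightarrow> (int \<Rightarrow> real) \<Rightarrow> int \<Rightarrow> real list" where
  "Yseq n y i = map (\<lambda>t. y (i + int t)) [0..<2*n+1]"

definition periodic_with :: "(int \<Rightarrow> 'b) \<Rightarrow> nat \<Rightarrow> bool" where
  "periodic_with x d = (d \<ge> 1 \<and> (\<forall>j. x (j + int d) = x j))"

end

theory Submission
  imports Defs
begin

lemma agree_tm:
  assumes "\<forall>t\<le>n. f (k + int t) = g (k' + int t)"
  shows "trop_min n a f k = trop_min n a g k'"
  unfolding trop_min_def
  by (rule arg_cong[where f=Min], rule image_cong, auto simp: assms)

lemma agree_mt:
  assumes "\<forall>t\<le>n. f (k + int t) = g (k' + int t)"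
  shows "min_twice n a f k = min_twice n a g k'"
  using agree_tm[OF assms, of a] assms unfolding min_twice_def
  by (metis (no_types, lifting))

lemma len_Y: "length (Yseq n y i) = 2*n+1"
  by (simp add: Yseq_def)

lemma nth_Y: "t < 2*n+1 \<Longrightarrow> Yseq n y i ! t = y (i + int t)"
  by (simp add: Yseq_def del: upt_Suc)

lemma vf: "0 \<le> (j::int) \<Longrightarrow> j \<le> 2*int n \<Longrightarrow> vec_fun (Yseq n y i) j = y (i + j)"
  unfolding vec_fun_def by (subst nth_Y) auto

lemma Y_vertex:
  assumes s: "seq_satisfies n a y" and m: "seq_minimal n a y" and r: "range y \<subseteq> Vset n M"
  shows "G0_vertex n M a (Yseq n y i)"
proof -
  have W: "Yseq n y i \<in> Wset n M"
    using r by (auto simp: Wset_def Yseq_def)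
  have S: "vec_satisfies n a (Yseq n y i)"
    unfolding vec_satisfies_def
  proof (intro allI impI)
    fix k :: int assume k: "0 \<le> k \<and> k \<le> int (length (Yseq n y i) - 1) - int n"
    have "\<forall>t\<le>n. vec_fun (Yseq n y i) (k + int t) = y ((i+k) + int t)"
      using k by (auto simp: len_Y vf add.assoc)
    then show "min_twice n a (vec_fun (Yseq n y i)) k"
      using agree_mt s unfolding seq_satisfies_def by metis
  qed
  have Mi: "vec_minimal n a (Yseq n y i)"
    unfolding vec_minimal_def
  proof (intro allI impI)
    fix j :: int assume j: "int n \<le> j \<and> j \<le> int (length (Yseq n y i) - 1) - int n"
    then have jn: "j = int n" by (simp add: len_Y)
    obtain k where k: "i + j - int n \<le> k" "k \<le> i + j"
      "real_of_int (a (nat (i + j - k))) + y (i+j) = trop_min n a y k"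
      using m unfolding seq_minimal_def by blast
    have e: "\<forall>t\<le>n. vec_fun (Yseq n y i) ((k - i) + int t) = y (k + int t)"
      using k jn by (auto simp: vf)
    have eq: "nat (j - (k - i)) = nat (i + j - k)" by (rule arg_cong[where f=nat]) simp
    show "\<exists>k. j - int n \<le> k \<and> k \<le> j \<and>
        real_of_int (a (nat (j - k))) + vec_fun (Yseq n y i) j = trop_min n a (vec_fun (Yseq n y i)) k"
    proof (rule exI[of _ "k - i"], intro conjI)
      show "j - int n \<le> k - i" using k jn by simp
      show "k - i \<le> j" using k jn by simp
      have "real_of_int (a (nat (j - (k - i)))) + vec_fun (Yseq n y i) j
          = real_of_int (a (nat (i + j - k))) + y (i+j)"
        unfolding eq using vf[of j n y i] jn by simp
      also have "\<dots> = trop_min n a y k" by (rule k(3))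
      also have "\<dots> = trop_min n a (vec_fun (Yseq n y i)) (k - i)"
        using agree_tm[OF e, of a] by simp
      finally show "real_of_int (a (nat (j - (k - i)))) + vec_fun (Yseq n y i) j
          = trop_min n a (vec_fun (Yseq n y i)) (k - i)" .
    qed
  qed
  show ?thesis using W S Mi by (simp add: G0_vertex_def)
qed

lemma Y_arrow: "\<forall>t<2*n. Yseq n y i ! (t+1) = Yseq n y (i+1) ! t"
  by (auto simp: nth_Y add.assoc)

lemma path_nth:
  assumes p: "G0_path n M a p"
  shows "t \<le> 2*n \<Longrightarrow> p i ! t = p (i + int t) ! 0"
proof (induction t arbitrary: i)
  case 0 then show ?case by simp
next
  case (Suc t)
  have "G0_arrow n M a (p i) (p (i+1))" using p unfolding G0_path_def by blast
  then have "\<forall>t'<2*n. p i ! (t'+1) = p (i+1) ! t'" unfolding G0_arrow_def by blast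
  then have a1: "p i ! Suc t = p (i+1) ! t" using Suc.prems by simp
  have a2: "p (i+1) ! t = p (i+1+int t) ! 0" using Suc.IH[of "i+1"] Suc.prems by simp
  have a3: "i + 1 + int t = i + int (Suc t)" by simp
  show ?case using a1 a2 a3 by simp
qed

lemma path_Y:
  assumes p: "G0_path n M a p"
  shows "p = Yseq n (\<lambda>j. p j ! 0)"
proof
  fix i
  have l: "length (p i) = 2*n+1"
    using p by (auto simp: G0_path_def G0_vertex_def Wset_def)
  show "p i = Yseq n (\<lambda>j. p j ! 0) i"
  proof (rule nth_equalityI)
    show "length (p i) = length (Yseq n (\<lambda>j. p j ! 0) i)" by (simp add: l len_Y)
    fix t assume "t < length (p i)"
    then have t: "t < 2*n+1" by (simp add: l)
    then have "p i ! t = p (i + int t) ! 0" using path_nth[OF p, of t i] by simp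
    then show "p i ! t = Yseq n (\<lambda>j. p j ! 0) i ! t" using nth_Y[OF t] by simp
  qed
qed

theorem lemma1:
  fixes n M :: nat and a :: "nat \<Rightarrow> int"
  assumes "n \<ge> 1" and "M \<ge> 1"
    and "\<forall>i\<le>n. 0 \<le> a i \<and> a i \<le> int M"
    and "a 0 = 0" and "a n = 0"
  shows "(\<forall>y. seq_satisfies n a y \<and> seq_minimal n a y \<and> range y \<subseteq> Vset n M \<longrightarrow>
            (\<forall>i. G0_vertex n M a (Yseq n y i) \<and> G0_arrow n M a (Yseq n y i) (Yseq n y (i+1))))
       \<and> (\<forall>p. G0_path n M a p \<longrightarrow>
            (\<exists>!y. seq_satisfies n a y \<and> seq_minimal n a y \<and> range y \<subseteq> Vset n M \<and> p = Yseq n y))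
       \<and> (\<forall>y d. seq_satisfies n a y \<and> seq_minimal n a y \<and> range y \<subseteq> Vset n M \<and> d \<ge> 1 \<longrightarrow>
            (periodic_with y d \<longleftrightarrow> periodic_with (Yseq n y) d))"
proof (intro conjI allI impI)
  fix y i assume h: "seq_satisfies n a y \<and> seq_minimal n a y \<and> range y \<subseteq> Vset n M"
  show "G0_vertex n M a (Yseq n y i)"
    using Y_vertex[of n a y M] h by auto
next
  fix y i assume h: "seq_satisfies n a y \<and> seq_minimal n a y \<and> range y \<subseteq> Vset n M"
  show "G0_arrow n M a (Yseq n y i) (Yseq n y (i+1))"
    using Y_vertex[of n a y M] h Y_arrow[of n y i] by (auto simp: G0_arrow_def)
next
  fix p assume p: "G0_path n M a p"
  define y where "y = (\<lambda>j. p j ! 0)"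
  have py: "p = Yseq n y" using path_Y[OF p] by (simp add: y_def)
  have uq: "y' = y" if "p = Yseq n y'" for y'
  proof
    fix j show "y' j = y j" using that by (simp add: y_def nth_Y)
  qed
  have sat: "seq_satisfies n a y"
    unfolding seq_satisfies_def
  proof
    fix k
    have "vec_satisfies n a (p k)" using p by (simp add: G0_path_def G0_vertex_def)
    then have "min_twice n a (vec_fun (Yseq n y k)) 0"
      by (simp add: py vec_satisfies_def len_Y)
    moreover have "\<forall>t\<le>n. vec_fun (Yseq n y k) (0 + int t) = y (k + int t)"
      by (auto simp: vf)
    ultimately show "min_twice n a y k" using agree_mt by metis
  qed
  have mn: "seq_minimal n a y"
    unfolding seq_minimal_def
  proof
    fix j
    let ?i = "j - int n"
    have "vec_minimal n a (p ?i)" using p by (simp add: G0_path_def G0_vertex_def)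
    then obtain k where k: "0 \<le> k" "k \<le> int n"
      "real_of_int (a (nat (int n - k))) + vec_fun (Yseq n y ?i) (int n)
         = trop_min n a (vec_fun (Yseq n y ?i)) k"
      by (auto simp: py vec_minimal_def len_Y)
    have e: "\<forall>t\<le>n. vec_fun (Yseq n y ?i) (k + int t) = y ((?i + k) + int t)"
      using k by (auto simp: vf add.assoc)
    have eq: "nat (j - (?i + k)) = nat (int n - k)" by (rule arg_cong[where f=nat]) simp
    show "\<exists>k. j - int n \<le> k \<and> k \<le> j \<and>
        real_of_int (a (nat (j - k))) + y j = trop_min n a y k"
    proof (rule exI[of _ "?i + k"], intro conjI)
      show "j - int n \<le> ?i + k" using k by simp
      show "?i + k \<le> j" using k by simp
      have "real_of_int (a (nat (j - (?i + k)))) + y j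
          = real_of_int (a (nat (int n - k))) + vec_fun (Yseq n y ?i) (int n)"
        unfolding eq using vf[of "int n" n y ?i] by simp
      also have "\<dots> = trop_min n a (vec_fun (Yseq n y ?i)) k" by (rule k(3))
      also have "\<dots> = trop_min n a y (?i + k)"
        using agree_tm[OF e, of a] by simp
      finally show "real_of_int (a (nat (j - (?i + k)))) + y j = trop_min n a y (?i + k)" .
    qed
  qed
  have rg: "range y \<subseteq> Vset n M"
  proof
    fix v assume "v \<in> range y"
    then obtain j where v: "v = p j ! 0" by (auto simp: y_def)
    have "p j \<in> Wset n M" using p by (simp add: G0_path_def G0_vertex_def)
    then show "v \<in> Vset n M" using v by (auto simp: Wset_def)
  qed
  show "\<exists>!y. seq_satisfies n a y \<and> seq_minimal n a y \<and> range y \<subseteq> Vset n M \<and> p = Yseq n y"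
    using sat mn rg py uq by blast
next
  fix y :: "int \<Rightarrow> real" and d :: nat
  assume h: "seq_satisfies n a y \<and> seq_minimal n a y \<and> range y \<subseteq> Vset n M \<and> d \<ge> 1"
  show "periodic_with y d \<longleftrightarrow> periodic_with (Yseq n y) d"
  proof
    assume per: "periodic_with y d"
    show "periodic_with (Yseq n y) d" unfolding periodic_with_def
    proof (intro conjI allI)
      show "d \<ge> 1" using h by simp
      fix j
      show "Yseq n y (j + int d) = Yseq n y j" unfolding Yseq_def
      proof (rule map_cong[OF refl])
        fix t
        have "y ((j + int t) + int d) = y (j + int t)" using per by (simp add: periodic_with_def)
        then show "y (j + int d + int t) = y (j + int t)" by (simp add: ac_simps)
      qed
    qed
  next
    assume a: "periodic_with (Yseq n y) d"
    show "periodic_with y d" unfolding periodic_with_def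
    proof (intro conjI allI)
      show "d \<ge> 1" using h by simp
      fix j
      have "Yseq n y (j + int d) ! 0 = Yseq n y j ! 0" using a by (simp add: periodic_with_def)
      then show "y (j + int d) = y j" by (simp add: nth_Y)
    qed
  qed
qed

end
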